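(* Let $a>0$, $h>0$, and let $\alpha_1$ be the smallest positive solution $q$ of $\tan(hq)=\frac{2aq}{q^2-a^2}$. If $ha\le1$, then $$\alpha_1\le\sqrt{a^2+\frac{2a}{h}}\le\frac{\sqrt{3a}}{\sqrt h}.$$ If moreover $ha\le 1/3$, then $$\sqrt{a^2+\frac{2a}{h+2ah^2}}\le\alpha_1.$$ Consequently, $\lim_{h\to0}\frac{\alpha_1(h)}{\sqrt{2a/h}}=1$. *)

theory Defs
  imports Complex_Main
begin

text \<open>Positive solutions q of tan(h q) = 2 a q / (q^2 - a^2). Points where either
  side is undefined (cos (h q) = 0, or q = a) are excluded, since Isabelle's
  tan and division are total.\<close>
definition tan_solutions :: "real \<Rightarrow> real \<Rightarrow> real set" where
  "tan_solutions a h = {q. q > 0 \<and> q \<noteq> a \<and> cos (h * q) \<noteq> 0 \<and>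
      tan (h * q) = 2 * a * q / (q^2 - a^2)}"

definition alpha1 :: "real \<Rightarrow> real \<Rightarrow> real" where
  "alpha1 a h = Inf (tan_solutions a h)"

end

theory Submission imports Defs "HOL-Analysis.Complex_Transcendental" begin

lemma xcos_le_sin:
  fixes x :: real assumes "0 \<le> x" "x \<le> pi"
  shows "x * cos x \<le> sin x"
proof -
  have "(\<lambda>t. sin t - t * cos t) 0 \<le> (\<lambda>t. sin t - t * cos t) x"
  proof (rule DERIV_nonneg_imp_nondecreasing[OF assms(1)])
    fix t :: real assume t: "0 \<le> t" "t \<le> x"
    have "DERIV (\<lambda>t. sin t - t * cos t) t :> cos t - (1 * cos t + t * (- sin t))"
      by (intro derivative_eq_intros) auto
    moreover have "0 \<le> t * sin t" using t assms by (intro mult_nonneg_nonneg sin_ge_zero) auto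
    ultimately show "\<exists>y. DERIV (\<lambda>t. sin t - t * cos t) t :> y \<and> y \<ge> 0" by force
  qed
  then show ?thesis by simp
qed

lemma cos_lb:
  fixes x :: real shows "1 - x^2/2 \<le> cos x"
proof -
  have c: "cos x = 1 - 2 * sin (x/2) ^ 2" using cos_double_sin[of "x/2"] by simp
  have "\<bar>sin (x/2)\<bar> \<le> \<bar>x/2\<bar>" by (rule abs_sin_x_le_abs_x)
  then have "\<bar>sin (x/2)\<bar>^2 \<le> \<bar>x/2\<bar>^2" by (intro power_mono) auto
  then have "sin (x/2) ^ 2 \<le> x^2/4" by (simp add: power_divide)
  then show ?thesis using c by simp
qed


lemma exists_sol:
  fixes a h :: real assumes a: "a > 0" and h: "h > 0" and ha: "h * a \<le> 1"
  shows "\<exists>q \<in> tan_solutions a h. q \<le> sqrt (a^2 + 2 * a / h)"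
proof -
  define Q where "Q = sqrt (a^2 + 2 * a / h)"
  define b where "b = min Q (pi / (2 * h))"
  define f where "f = (\<lambda>q. sin (h * q) * (q^2 - a^2) - 2 * a * q * cos (h * q))"
  have pi2: "1 < pi / 2" using pi_gt3 by simp
  have Qsq: "Q^2 = a^2 + 2 * a / h" unfolding Q_def using a h by simp
  have aQ: "a < Q" unfolding Q_def using a h
    by (metis add.commute divide_pos_pos less_add_same_cancel2 order_less_le real_less_rsqrt zero_less_mult_iff zero_less_numeral)
  have "h * a < pi / 2" using ha pi2 by linarith
  then have apih: "a < pi / (2 * h)" using h by (simp add: field_simps)
  have ab: "a < b" unfolding b_def using aQ apih by simp
  have "0 < cos (h * a)" using \<open>h * a < pi / 2\<close> a h by (intro cos_gt_zero) auto
  then have fa: "f a < 0" unfolding f_def using a by simp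
  have fb: "0 \<le> f b"
  proof (cases "Q < pi / (2 * h)")
    case True
    then have bQ: "b = Q" unfolding b_def by simp
    have hQ: "h * Q < pi / 2" using True h by (simp add: field_simps)
    have "0 \<le> h * Q" using h aQ a by simp
    then have "h * Q * cos (h * Q) \<le> sin (h * Q)" using hQ by (intro xcos_le_sin) auto
    then have "0 \<le> (2 * a / h) * (sin (h * Q) - h * Q * cos (h * Q))" using a h by simp
    also have "\<dots> = f Q" unfolding f_def using Qsq h by (simp add: algebra_simps)
    finally show ?thesis using bQ by simp
  next
    case False
    then have bp: "b = pi / (2 * h)" unfolding b_def by simp
    have hb: "h * b = pi / 2" using bp h by simp
    have "f b = b^2 - a^2" unfolding f_def hb by simp
    moreover have "a^2 < b^2" using ab a by (simp add: power_strict_mono)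
    ultimately show ?thesis by simp
  qed
  have "continuous_on {a..b} f" unfolding f_def by (intro continuous_intros)
  from IVT'[of f a 0 b, OF less_imp_le[OF fa] fb less_imp_le[OF ab] this]
  obtain q where q: "a \<le> q" "q \<le> b" "f q = 0" by blast
  have qa: "q \<noteq> a" using q fa by auto
  have hqle: "h * q \<le> pi / 2" using q(2) h unfolding b_def by (simp add: field_simps)
  have hqne: "h * q \<noteq> pi / 2"
  proof
    assume e: "h * q = pi / 2"
    have "f q = q^2 - a^2" unfolding f_def e by simp
    moreover have "a^2 < q^2" using q(1) qa a by (simp add: power_strict_mono)
    ultimately show False using q(3) by simp
  qed
  have "0 < h * q" using h q(1) a by simp
  then have cpos: "0 < cos (h * q)" using hqle hqne by (intro cos_gt_zero) auto
  have qsq: "q^2 - a^2 > 0" using q(1) qa a by (simp add: power_strict_mono)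
  have "sin (h * q) * (q^2 - a^2) = 2 * a * q * cos (h * q)" using q(3) unfolding f_def by simp
  then have "tan (h * q) = 2 * a * q / (q^2 - a^2)" using cpos qsq
    by (simp add: tan_def field_simps)
  then have "q \<in> tan_solutions a h" unfolding tan_solutions_def using q(1) qa a cpos by auto
  moreover have "q \<le> Q" using q(2) unfolding b_def by simp
  ultimately show ?thesis unfolding Q_def by blast
qed


lemma poly_aux:
  fixes t x :: real assumes "0 \<le> t" "t \<le> 1/3" "x^2 \<le> t^2 + 2*t"
  shows "1 \<le> (1 + 2*t) * (1 - x^2/2)"
proof -
  have "(1 + 2*t) * (1 - (t^2 + 2*t)/2) \<le> (1 + 2*t) * (1 - x^2/2)"
    using assms by (intro mult_left_mono) auto
  moreover have "1 \<le> (1 + 2*t) * (1 - (t^2 + 2*t)/2)"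
  proof -
    have "(1 + 2*t) * (1 - (t^2 + 2*t)/2) = 1 + t * (1 - 5/2 * t - t^2)" by (simp add: algebra_simps power2_eq_square)
    moreover have "t * t \<le> (1/3) * (1/3)" using assms by (intro mult_mono) auto
    then have "0 \<le> 1 - 5/2 * t - t^2" using assms unfolding power2_eq_square by linarith
    then have "0 \<le> t * (1 - 5/2 * t - t^2)" using assms by simp
    ultimately show ?thesis by linarith
  qed
  ultimately show ?thesis by linarith
qed

lemma lower_sol:
  fixes a h q :: real assumes a: "a > 0" and h: "h > 0" and ha: "h * a \<le> 1/3"
    and q: "q \<in> tan_solutions a h"
  shows "sqrt (a^2 + 2 * a / (h + 2 * a * h^2)) \<le> q"
proof -
  define Q where "Q = sqrt (a^2 + 2 * a / h)"
  define L where "L = sqrt (a^2 + 2 * a / (h + 2 * a * h^2))"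
  have q0: "q > 0" and qa: "q \<noteq> a" and cq: "cos (h*q) \<noteq> 0"
    and tq: "tan (h * q) = 2 * a * q / (q^2 - a^2)"
    using q unfolding tan_solutions_def by auto
  have pi2: "1 < pi / 2" using pi_gt3 by simp
  have LQ: "L \<le> Q" unfolding L_def Q_def using a h
    by (intro real_sqrt_le_mono add_left_mono divide_left_mono) (auto simp: add_pos_pos)
  show ?thesis
  proof (cases "Q \<le> q")
    case True then show ?thesis using LQ unfolding L_def by simp
  next
    case False
    then have qQ: "q < Q" by simp
    have "h^2 * Q^2 = (h*a)^2 + 2 * (h * a)" unfolding Q_def using a h
      by (simp add: field_simps power2_eq_square)
    also have "\<dots> \<le> (1/3)^2 + 2 * (1/3)" using ha a h
      by (intro add_mono power_mono) (auto simp: mult.commute)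
    finally have "(h*Q)^2 < 1^2" by (simp add: power_mult_distrib power_divide)
    then have hQ1: "h * Q < 1" using h a by (smt (verit) power_mono)
    have hq0: "0 < h * q" using h q0 by simp
    have hq1: "h * q < 1" using qQ h hQ1 by (smt (verit) mult_strict_left_mono)
    have cpos: "0 < cos (h * q)" using hq0 hq1 pi2 by (intro cos_gt_zero) auto
    have tpos: "0 < tan (h * q)" using hq0 hq1 pi2 by (intro tan_gt_zero) auto
    have qa': "a < q"
    proof (rule ccontr)
      assume "\<not> a < q"
      then have "q < a" using qa by simp
      then have "q^2 - a^2 < 0" using q0 by (simp add: power_strict_mono)
      then have "2 * a * q / (q^2 - a^2) < 0" using a q0 by (simp add: divide_pos_neg)
      then show False using tq tpos by simp
    qed
    define x where "x = h * q"
    define t where "t = h * a"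
    have x2: "x^2 \<le> t^2 + 2*t"
    proof -
      have "x^2 \<le> (h*Q)^2" unfolding x_def using hq0 qQ h by (intro power_mono) auto
      also have "\<dots> = t^2 + 2*t" unfolding t_def Q_def using a h
        by (simp add: field_simps power2_eq_square)
      finally show ?thesis .
    qed
    have t0: "0 \<le> t" "t \<le> 1/3" unfolding t_def using a h ha by auto
    have key: "1 \<le> (1 + 2*t) * (1 - x^2/2)" by (rule poly_aux[OF t0 x2])
    have cl: "1 - x^2/2 \<le> cos x" by (rule cos_lb)
    have sl: "sin x \<le> x" using hq0 unfolding x_def by (intro sin_x_le_x) auto
    have "tan x \<le> x * (1 + 2*t)"
    proof -
      have "1 - x^2/2 > 0" using key t0 by (smt (verit) mult_nonneg_nonpos)
      have "x \<le> x * ((1 + 2*t) * (1 - x^2/2))" using key hq0 unfolding x_def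
        by (simp add: mult_le_cancel_left1)
      also have "\<dots> \<le> x * ((1 + 2*t) * cos x)" using cl hq0 t0 unfolding x_def[symmetric]
        by (intro mult_left_mono) auto
      also have "\<dots> = x * (1 + 2*t) * cos x" by simp
      finally have "sin x \<le> x * (1 + 2*t) * cos x" using sl by linarith
      then show ?thesis using cpos unfolding x_def by (simp add: tan_def divide_le_eq)
    qed
    then have ineq: "2 * a * q / (q^2 - a^2) \<le> h * q * (1 + 2 * h * a)" using tq unfolding x_def t_def by (simp add: mult.assoc)
    have qsq: "q^2 - a^2 > 0" using qa' a by (simp add: power_strict_mono)
    have "2 * a * q \<le> h * q * (1 + 2 * h * a) * (q^2 - a^2)" using ineq qsq by (simp add: divide_le_eq)
    also have "h * q * (1 + 2 * h * a) * (q^2 - a^2) = q * ((h + 2 * a * h^2) * (q^2 - a^2))"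
      by (simp add: algebra_simps power2_eq_square)
    finally have "q * (2 * a) \<le> q * ((h + 2 * a * h^2) * (q^2 - a^2))" by (simp add: mult.commute mult.left_commute)
    then have "2 * a \<le> (h + 2 * a * h^2) * (q^2 - a^2)" using q0 by simp
    moreover have "0 < h + 2 * a * h^2" using a h by (simp add: add_pos_pos)
    ultimately have "2 * a / (h + 2 * a * h^2) \<le> q^2 - a^2"
      by (subst divide_le_eq) (simp add: mult.commute)
    then have "L \<le> sqrt (q^2)" unfolding L_def by (intro real_sqrt_le_mono) simp
    then show ?thesis using q0 unfolding L_def by simp
  qed
qed


lemma alg_aux:
  fixes a h d :: real assumes "0 < a" "0 < h" "0 < d"
  shows "(a^2 + 2 * a / (h * d)) / (2 * a / h) = a * h / 2 + 1 / d"
  using assms by (simp add: field_simps power2_eq_square)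

lemma upper_all:
  fixes a h :: real assumes a: "a > 0" and h: "h > 0" and ha: "h * a \<le> 1"
  shows "alpha1 a h \<le> sqrt (a^2 + 2 * a / h)"
proof -
  obtain q where q: "q \<in> tan_solutions a h" "q \<le> sqrt (a^2 + 2 * a / h)"
    using exists_sol[OF a h ha] by blast
  have "bdd_below (tan_solutions a h)" unfolding tan_solutions_def
    by (rule bdd_belowI[of _ 0]) auto
  then have "alpha1 a h \<le> q" unfolding alpha1_def using q(1) by (simp add: cInf_lower)
  then show ?thesis using q(2) by simp
qed

lemma lower_all:
  fixes a h :: real assumes a: "a > 0" and h: "h > 0" and ha: "h * a \<le> 1/3"
  shows "sqrt (a^2 + 2 * a / (h + 2 * a * h^2)) \<le> alpha1 a h"
proof -
  have "h * a \<le> 1" using ha by simp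
  then obtain q where q: "q \<in> tan_solutions a h"
    using exists_sol[OF a h] by blast
  show ?thesis unfolding alpha1_def
    by (rule cInf_greatest) (use q lower_sol[OF a h ha] in auto)
qed

lemma second_ineq:
  fixes a h :: real assumes a: "a > 0" and h: "h > 0" and ha: "h * a \<le> 1"
  shows "sqrt (a^2 + 2 * a / h) \<le> sqrt (3 * a) / sqrt h"
proof -
  have "a \<le> 1 / h" using ha h by (simp add: field_simps mult.commute)
  then have "a * a \<le> a * (1/h)" using a by (intro mult_left_mono) auto
  then have "a^2 + 2 * a / h \<le> 3 * a / h" by (simp add: power2_eq_square)
  then have "sqrt (a^2 + 2 * a / h) \<le> sqrt (3 * a / h)" by (rule real_sqrt_le_mono)
  then show ?thesis by (simp add: real_sqrt_divide)
qed

theorem lemma3p3: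
  fixes a :: real
  assumes "a > 0"
  shows "(\<forall>h>0. h * a \<le> 1 \<longrightarrow>
            alpha1 a h \<le> sqrt (a^2 + 2 * a / h) \<and>
            sqrt (a^2 + 2 * a / h) \<le> sqrt (3 * a) / sqrt h)
       \<and> (\<forall>h>0. h * a \<le> 1/3 \<longrightarrow>
            sqrt (a^2 + 2 * a / (h + 2 * a * h^2)) \<le> alpha1 a h)
       \<and> ((\<lambda>h. alpha1 a h / sqrt (2 * a / h)) \<longlongrightarrow> 1) (at_right 0)"
proof (intro conjI allI impI)
  fix h :: real assume "h > 0" "h * a \<le> 1"
  then show "alpha1 a h \<le> sqrt (a^2 + 2 * a / h)" "sqrt (a^2 + 2 * a / h) \<le> sqrt (3 * a) / sqrt h"
    using upper_all second_ineq assms by auto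
next
  fix h :: real assume "h > 0" "h * a \<le> 1/3"
  then show "sqrt (a^2 + 2 * a / (h + 2 * a * h^2)) \<le> alpha1 a h"
    using lower_all assms by auto
next
  let ?g = "\<lambda>h. sqrt (a * h / 2 + 1 / (1 + 2 * a * h))"
  let ?k = "\<lambda>h. sqrt (a * h / 2 + 1)"
  have gl: "(?g \<longlongrightarrow> 1) (at_right 0)"
  proof -
    have "(?g \<longlongrightarrow> sqrt (a * 0 / 2 + 1 / (1 + 2 * a * 0))) (at_right 0)"
      by (intro tendsto_intros) auto
    then show ?thesis by simp
  qed
  have kl: "(?k \<longlongrightarrow> 1) (at_right 0)"
  proof -
    have "(?k \<longlongrightarrow> sqrt (a * 0 / 2 + 1)) (at_right 0)"
      by (intro tendsto_intros) auto
    then show ?thesis by simp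
  qed
  have ev: "eventually (\<lambda>h. 0 < h \<and> h * a \<le> 1/3) (at_right (0::real))"
    using assms
    unfolding eventually_at_right[OF zero_less_one]
    by (intro exI[of _ "1/(3*a)"]) (auto simp: field_simps)
  show "((\<lambda>h. alpha1 a h / sqrt (2 * a / h)) \<longlongrightarrow> 1) (at_right 0)"
  proof (rule tendsto_sandwich[OF _ _ gl kl])
    show "eventually (\<lambda>h. ?g h \<le> alpha1 a h / sqrt (2 * a / h)) (at_right 0)"
      using ev
    proof eventually_elim
      case (elim h)
      then have h: "0 < h" and ha: "h * a \<le> 1/3" by auto
      have S: "0 < sqrt (2 * a / h)" using h assms by simp
      have "?g h = sqrt (a^2 + 2 * a / (h + 2 * a * h^2)) / sqrt (2 * a / h)"
      proof -
        have "(a^2 + 2 * a / (h + 2 * a * h^2)) / (2 * a / h) = a * h / 2 + 1 / (1 + 2 * a * h)"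
        proof -
          have e: "h + 2 * a * h^2 = h * (1 + 2 * a * h)" by (simp add: algebra_simps power2_eq_square)
          have p: "0 < 1 + 2 * a * h" using h assms by (simp add: add_pos_pos)
          show ?thesis unfolding e using alg_aux[OF assms h p] by simp
        qed
        then show ?thesis by (metis real_sqrt_divide)
      qed
      also have "\<dots> \<le> alpha1 a h / sqrt (2 * a / h)"
        using lower_all[OF assms h ha] S by (simp add: divide_right_mono)
      finally show ?case .
    qed
    show "eventually (\<lambda>h. alpha1 a h / sqrt (2 * a / h) \<le> ?k h) (at_right 0)"
      using ev
    proof eventually_elim
      case (elim h)
      then have h: "0 < h" and ha: "h * a \<le> 1" by auto
      have S: "0 < sqrt (2 * a / h)" using h assms by simp
      have "alpha1 a h / sqrt (2 * a / h) \<le> sqrt (a^2 + 2 * a / h) / sqrt (2 * a / h)"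
        using upper_all[OF assms h ha] S by (simp add: divide_right_mono)
      also have "\<dots> = ?k h"
      proof -
        have "(a^2 + 2 * a / h) / (2 * a / h) = a * h / 2 + 1"
          using h assms by (simp add: field_simps power2_eq_square)
        then show ?thesis by (metis real_sqrt_divide)
      qed
      finally show ?case .
    qed
  qed
qed

end
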